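(* Let $E$ be a finite set, $\mathcal{W}\subseteq\{+,-,0\}^E$ an affine oriented matroid, and $X,Y\in\mathcal{W}$ with $\underline{X}=\underline{Y}$, $X\neq -Y$ and $I(X,-Y)\cap\mathcal{W}=\emptyset$. Then $B(X,-Y)\cap\mathcal{W}=\emptyset$.
   Context: For $X\in\{+,-,0\}^E$: support $\underline{X}=\{e:X_e\neq0\}$; $(-X)_e=-X_e$; composition $(X\circ Y)_e=X_e$ if $X_e\neq0$, else $Y_e$; $S(X,Y)=\{e: X_e,Y_e\neq0, X_e\neq Y_e\}$. An oriented matroid on $F$ is $\mathcal{O}\subseteq\{+,-,0\}^F$ with: (O1) zero vector in $\mathcal{O}$; (O2) $X\in\mathcal{O}\Rightarrow -X\in\mathcal{O}$; (O3) $X,Y\in\mathcal{O}\Rightarrow X\circ Y\in\mathcal{O}$; (O4) if $X,Y\in\mathcal{O}$, $\underline{X}=\underline{Y}$, $e\in S(X,Y)$, there is $Z\in\mathcal{O}$ with $Z_e=0$ and $Z_f=(X\circ Y)_f=(Y\circ X)_f$ for all $f\notin S(X,Y)$. $\mathcal{W}\subseteq\{+,-,0\}^E$ is an affine oriented matroid if there exist $g\notin E$ and an oriented matroid $\mathcal{O}$ on $E\cup\{g\}$ with $\mathcal{W}=\{X|_E: X\in\mathcal{O}, X_g=+\}$. For $X,Y$ with $\underline{X}=\underline{Y}$ and $X\neq Y$: $I_e(X,Y)=\{V : \underline{V}\subseteq\underline{X}\setminus\{e\}, V_f=X_f\ \forall f\notin S(X,Y)\}$ for $e\in S(X,Y)$,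 $I(X,Y)=\bigcup_{e\in S(X,Y)}I_e(X,Y)$, and $B(X,Y)=\{V\in\{+,-,0\}^E: V\notin\{X,Y\}, \underline{V}=\underline{X}, V_f=X_f\ \forall f\notin S(X,Y)\}$. *)

theory Defs
  imports Main
begin

datatype sign = Pos | Neg | Zero

definition sv :: "'a set \<Rightarrow> ('a \<Rightarrow> sign) set" where
  "sv F = {X. \<forall>e. e \<notin> F \<longrightarrow> X e = Zero}"

definition supp :: "('a \<Rightarrow> sign) \<Rightarrow> 'a set" where
  "supp X = {e. X e \<noteq> Zero}"

fun sneg :: "sign \<Rightarrow> sign" where
  "sneg Pos = Neg" | "sneg Neg = Pos" | "sneg Zero = Zero"

definition vneg :: "('a \<Rightarrow> sign) \<Rightarrow> ('a \<Rightarrow> sign)" where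
  "vneg X = (\<lambda>e. sneg (X e))"

definition svcomp :: "('a \<Rightarrow> sign) \<Rightarrow> ('a \<Rightarrow> sign) \<Rightarrow> ('a \<Rightarrow> sign)" where
  "svcomp X Y = (\<lambda>e. if X e \<noteq> Zero then X e else Y e)"

definition sep :: "('a \<Rightarrow> sign) \<Rightarrow> ('a \<Rightarrow> sign) \<Rightarrow> 'a set" where
  "sep X Y = {e. X e \<noteq> Zero \<and> Y e \<noteq> Zero \<and> X e \<noteq> Y e}"

definition oriented_matroid :: "'a set \<Rightarrow> ('a \<Rightarrow> sign) set \<Rightarrow> bool" where
  "oriented_matroid F Om \<longleftrightarrow>
     Om \<subseteq> sv F \<and>
     (\<lambda>_. Zero) \<in> Om \<and>
     (\<forall>X\<in>Om. vneg X \<in> Om) \<and>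
     (\<forall>X\<in>Om. \<forall>Y\<in>Om. svcomp X Y \<in> Om) \<and>
     (\<forall>X\<in>Om. \<forall>Y\<in>Om. \<forall>e. supp X = supp Y \<and> e \<in> sep X Y \<longrightarrow>
        (\<exists>Z\<in>Om. Z e = Zero \<and>
           (\<forall>f. f \<notin> sep X Y \<longrightarrow> Z f = svcomp X Y f \<and> Z f = svcomp Y X f)))"

definition restr :: "'a set \<Rightarrow> ('a \<Rightarrow> sign) \<Rightarrow> ('a \<Rightarrow> sign)" where
  "restr E X = (\<lambda>e. if e \<in> E then X e else Zero)"

definition affine_oriented_matroid :: "'a set \<Rightarrow> ('a \<Rightarrow> sign) set \<Rightarrow> bool" where
  "affine_oriented_matroid E W \<longleftrightarrow>
     (\<exists>g Om. g \<notin> E \<and> oriented_matroid (insert g E) Om \<and>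
        W = {restr E X | X. X \<in> Om \<and> X g = Pos})"

definition I_e :: "'a set \<Rightarrow> ('a \<Rightarrow> sign) \<Rightarrow> ('a \<Rightarrow> sign) \<Rightarrow> 'a \<Rightarrow> ('a \<Rightarrow> sign) set" where
  "I_e E X Y e = {V \<in> sv E. supp V \<subseteq> supp X - {e} \<and> (\<forall>f. f \<notin> sep X Y \<longrightarrow> V f = X f)}"

definition I_set :: "'a set \<Rightarrow> ('a \<Rightarrow> sign) \<Rightarrow> ('a \<Rightarrow> sign) \<Rightarrow> ('a \<Rightarrow> sign) set" where
  "I_set E X Y = (\<Union>e\<in>sep X Y. I_e E X Y e)"

definition B_set :: "'a set \<Rightarrow> ('a \<Rightarrow> sign) \<Rightarrow> ('a \<Rightarrow> sign) \<Rightarrow> ('a \<Rightarrow> sign) set" where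
  "B_set E X Y = {V \<in> sv E. V \<notin> {X, Y} \<and> supp V = supp X \<and> (\<forall>f. f \<notin> sep X Y \<longrightarrow> V f = X f)}"

end

theory Submission
  imports Defs
begin

theorem lemma2p3:
  fixes E :: "'a set" and W :: "('a \<Rightarrow> sign) set" and X Y :: "'a \<Rightarrow> sign"
  assumes "finite E"
    and "affine_oriented_matroid E W"
    and "X \<in> W" and "Y \<in> W"
    and "supp X = supp Y"
    and "X \<noteq> vneg Y"
    and "I_set E X (vneg Y) \<inter> W = {}"
  shows "B_set E X (vneg Y) \<inter> W = {}"
proof (rule ccontr)
  assume "B_set E X (vneg Y) \<inter> W \<noteq> {}"
  then obtain V where VB: "V \<in> B_set E X (vneg Y)" and VW: "V \<in> W" by blast
  from assms(2) obtain g Om where gE: "g \<notin> E" and om: "oriented_matroid (insert g E) Om"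
    and Wd: "W = {restr E X | X. X \<in> Om \<and> X g = Pos}"
    unfolding affine_oriented_matroid_def by blast
  obtain Xh where Xh: "Xh \<in> Om" "Xh g = Pos" "X = restr E Xh" using assms(3) Wd by blast
  obtain Vh where Vh: "Vh \<in> Om" "Vh g = Pos" "V = restr E Vh" using VW Wd by blast
  have sub: "Om \<subseteq> sv (insert g E)" using om unfolding oriented_matroid_def by blast
  have VX: "V \<noteq> X" and sV: "supp V = supp X" and agr: "\<forall>f. f \<notin> sep X (vneg Y) \<longrightarrow> V f = X f"
    using VB unfolding B_set_def by auto
  obtain e where e: "V e \<noteq> X e" using VX by blast
  have eS: "e \<in> sep X (vneg Y)" using agr e by blast
  have Xe: "X e \<noteq> Zero" using eS unfolding sep_def by blast
  have eE: "e \<in> E" using Xe Xh(3) unfolding restr_def by (auto split: if_splits)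
  have Ve: "V e \<noteq> Zero" using Xe sV unfolding supp_def by blast
  have supph: "supp Xh = supp Vh"
  proof -
    have "Xh f = Zero \<longleftrightarrow> Vh f = Zero" for f
    proof (cases "f \<in> E")
      case True
      then have "X f = Xh f" "V f = Vh f" using Xh(3) Vh(3) unfolding restr_def by auto
      moreover have "V f = Zero \<longleftrightarrow> X f = Zero" using sV unfolding supp_def set_eq_iff by blast
      ultimately show ?thesis by simp
    next
      case False
      show ?thesis
      proof (cases "f = g")
        case True then show ?thesis using Xh Vh by simp
      next
        case False2: False
        then have "f \<notin> insert g E" using False by blast
        then show ?thesis using sub Xh(1) Vh(1) unfolding sv_def by blast
      qed
    qed
    then show ?thesis unfolding supp_def by blast
  qed
  have eh: "e \<in> sep Xh Vh"
    using Xe Ve e eE Xh(3) Vh(3) unfolding sep_def restr_def by auto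
  obtain Z where Z: "Z \<in> Om" "Z e = Zero"
    "\<forall>f. f \<notin> sep Xh Vh \<longrightarrow> Z f = svcomp Xh Vh f \<and> Z f = svcomp Vh Xh f"
    using om Xh(1) Vh(1) supph eh unfolding oriented_matroid_def by blast
  have gs: "g \<notin> sep Xh Vh" using Xh(2) Vh(2) unfolding sep_def by simp
  have Zg: "Z g = Pos" using Z(3) gs Xh(2) unfolding svcomp_def by simp
  have RW: "restr E Z \<in> W" using Wd Z(1) Zg by blast
  have sepsub: "f \<in> E \<Longrightarrow> f \<in> sep Xh Vh \<Longrightarrow> X f \<noteq> Zero" for f
    using Xh(3) unfolding sep_def restr_def by auto
  have offZ: "f \<in> E \<Longrightarrow> f \<notin> sep Xh Vh \<Longrightarrow> Z f = X f" for f
  proof -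
    assume fE: "f \<in> E" and fs: "f \<notin> sep Xh Vh"
    have "X f = Xh f" "V f = Vh f" using fE Xh(3) Vh(3) unfolding restr_def by auto
    moreover have "Xh f = Zero \<longleftrightarrow> Vh f = Zero" using supph unfolding supp_def by blast
    ultimately show ?thesis using Z(3) fs unfolding svcomp_def by auto
  qed
  have "restr E Z \<in> I_e E X (vneg Y) e"
    unfolding I_e_def
  proof (intro CollectI conjI allI impI)
    show "restr E Z \<in> sv E" unfolding sv_def restr_def by simp
    show "supp (restr E Z) \<subseteq> supp X - {e}"
    proof
      fix f assume "f \<in> supp (restr E Z)"
      then have fE: "f \<in> E" and Zf: "Z f \<noteq> Zero" unfolding supp_def restr_def by (auto split: if_splits)
      have "f \<noteq> e" using Zf Z(2) by blast
      moreover have "X f \<noteq> Zero"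
        using sepsub[OF fE] offZ[OF fE] Zf by (cases "f \<in> sep Xh Vh") auto
      ultimately show "f \<in> supp X - {e}" unfolding supp_def by blast
    qed
  next
    fix f assume fn: "f \<notin> sep X (vneg Y)"
    show "restr E Z f = X f"
    proof (cases "f \<in> E")
      case True
      have "V f = X f" using agr fn by blast
      then have "f \<notin> sep Xh Vh" using True Xh(3) Vh(3) unfolding sep_def restr_def by auto
      then show ?thesis using offZ True unfolding restr_def by simp
    next
      case False
      then show ?thesis using Xh(3) unfolding restr_def by simp
    qed
  qed
  then have "restr E Z \<in> I_set E X (vneg Y)" using eS unfolding I_set_def by blast
  then show False using assms(7) RW by blast
qed

end
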